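(* Let $\Gamma_1,\Gamma_2$ be finite connected graphs, each having $1$ as an eigenvalue of its normalized Laplacian, with eigenfunctions $f^1$ on $\Gamma_1$ and $f^2$ on $\Gamma_2$. Assume $f^1(p_1)=f^2(p_2)$ for some vertices $p_1\in\Gamma_1$, $p_2\in\Gamma_2$. Let $\Gamma$ be the graph obtained from the disjoint union of $\Gamma_1$ and $\Gamma_2$ by identifying $p_1$ with $p_2$. Then $1$ is an eigenvalue of the normalized Laplacian of $\Gamma$, with an eigenfunction equal to $f^1$ on $\Gamma_1$ and to $f^2$ on $\Gamma_2$.
   Context: For a finite simple graph without isolated vertices, write $i\sim j$ for adjacency and $n_i$ for the degree of $i$. The normalized Laplacian acts on real functions $v$ on the vertices by $\Delta v(i)=v(i)-\frac{1}{n_i}\sum_{j\sim i}v(j)$; $\lambda$ is an eigenvalue with eigenfunction $u$ if $u\not\equiv 0$ and $\frac{1}{n_i}\sum_{j\sim i}u(j)=(1-\lambda)u(i)$ for all $i$. For $\lambda=1$ this says $\sum_{j\sim i}u(j)=0$ for all $i$. *)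

theory Defs
  imports Complex_Main
begin

definition simple_graph :: "'a set \<Rightarrow> ('a \<Rightarrow> 'a \<Rightarrow> bool) \<Rightarrow> bool" where
  "simple_graph V E \<longleftrightarrow> finite V \<and> (\<forall>x y. E x y \<longrightarrow> x \<in> V \<and> y \<in> V)
     \<and> (\<forall>x y. E x y \<longrightarrow> E y x) \<and> (\<forall>x. \<not> E x x) \<and> (\<forall>x\<in>V. \<exists>y. E x y)"

definition connected_graph :: "'a set \<Rightarrow> ('a \<Rightarrow> 'a \<Rightarrow> bool) \<Rightarrow> bool" where
  "connected_graph V E \<longleftrightarrow> simple_graph V E \<and> (\<forall>x\<in>V. \<forall>y\<in>V. E\<^sup>*\<^sup>* x y)"

definition nbrs :: "'a set \<Rightarrow> ('a \<Rightarrow> 'a \<Rightarrow> bool) \<Rightarrow> 'a \<Rightarrow> 'a set" where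
  "nbrs V E i = {j \<in> V. E i j}"

definition degree :: "'a set \<Rightarrow> ('a \<Rightarrow> 'a \<Rightarrow> bool) \<Rightarrow> 'a \<Rightarrow> nat" where
  "degree V E i = card (nbrs V E i)"

definition eigenfunction :: "'a set \<Rightarrow> ('a \<Rightarrow> 'a \<Rightarrow> bool) \<Rightarrow> real \<Rightarrow> ('a \<Rightarrow> real) \<Rightarrow> bool" where
  "eigenfunction V E lam u \<longleftrightarrow> (\<exists>x\<in>V. u x \<noteq> 0) \<and>
     (\<forall>i\<in>V. (\<Sum>j\<in>nbrs V E i. u j) / real (degree V E i) = (1 - lam) * u i)"

definition eigenvalue :: "'a set \<Rightarrow> ('a \<Rightarrow> 'a \<Rightarrow> bool) \<Rightarrow> real \<Rightarrow> bool" where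
  "eigenvalue V E lam \<longleftrightarrow> (\<exists>u. eigenfunction V E lam u)"

text \<open>Gluing: disjoint union (Inl = copy of Gamma1, Inr = copy of Gamma2) with p2 identified
with p1; the glued vertex is represented by Inl p1.\<close>
definition glue_V :: "'a set \<Rightarrow> 'b set \<Rightarrow> 'b \<Rightarrow> ('a + 'b) set" where
  "glue_V V1 V2 p2 = Inl ` V1 \<union> Inr ` (V2 - {p2})"

definition glue_E :: "('a \<Rightarrow> 'a \<Rightarrow> bool) \<Rightarrow> ('b \<Rightarrow> 'b \<Rightarrow> bool) \<Rightarrow> 'a \<Rightarrow> 'b
    \<Rightarrow> ('a + 'b) \<Rightarrow> ('a + 'b) \<Rightarrow> bool" where
  "glue_E E1 E2 p1 p2 a b = (case (a, b) of
       (Inl x, Inl y) \<Rightarrow> E1 x y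
     | (Inr x, Inr y) \<Rightarrow> x \<noteq> p2 \<and> y \<noteq> p2 \<and> E2 x y
     | (Inl x, Inr y) \<Rightarrow> x = p1 \<and> y \<noteq> p2 \<and> E2 p2 y
     | (Inr x, Inl y) \<Rightarrow> y = p1 \<and> x \<noteq> p2 \<and> E2 x p2)"

definition glue_fun :: "('a \<Rightarrow> real) \<Rightarrow> ('b \<Rightarrow> real) \<Rightarrow> ('a + 'b) \<Rightarrow> real" where
  "glue_fun f1 f2 v = (case v of Inl x \<Rightarrow> f1 x | Inr y \<Rightarrow> f2 y)"

end

theory Submission
  imports Defs
begin

lemma sum_zero_of_eig:
  assumes "simple_graph V E" "eigenfunction V E 1 f" "i \<in> V"
  shows "(\<Sum>j\<in>nbrs V E i. f j) = 0"
proof -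
  have fin: "finite (nbrs V E i)" using assms(1) unfolding simple_graph_def nbrs_def by auto
  have "(\<Sum>j\<in>nbrs V E i. f j) / real (degree V E i) = 0"
    using assms(2,3) unfolding eigenfunction_def by auto
  then consider "(\<Sum>j\<in>nbrs V E i. f j) = 0" | "degree V E i = 0" by auto
  then show ?thesis
  proof cases
    case 2 then have "nbrs V E i = {}" using fin unfolding degree_def by simp
    then show ?thesis by simp
  qed
qed

theorem mainTheorem8:
  fixes V1 :: "'a set" and E1 :: "'a \<Rightarrow> 'a \<Rightarrow> bool"
    and V2 :: "'b set" and E2 :: "'b \<Rightarrow> 'b \<Rightarrow> bool"
    and f1 :: "'a \<Rightarrow> real" and f2 :: "'b \<Rightarrow> real" and p1 :: 'a and p2 :: 'b
  assumes "connected_graph V1 E1" and "connected_graph V2 E2"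
    and "eigenfunction V1 E1 1 f1" and "eigenfunction V2 E2 1 f2"
    and "p1 \<in> V1" and "p2 \<in> V2" and "f1 p1 = f2 p2"
  shows "eigenvalue (glue_V V1 V2 p2) (glue_E E1 E2 p1 p2) 1
    \<and> eigenfunction (glue_V V1 V2 p2) (glue_E E1 E2 p1 p2) 1 (glue_fun f1 f2)"
proof -
  let ?V = "glue_V V1 V2 p2" and ?E = "glue_E E1 E2 p1 p2" and ?u = "glue_fun f1 f2"
  have g1: "simple_graph V1 E1" and g2: "simple_graph V2 E2"
    using assms(1,2) unfolding connected_graph_def by auto
  have fin1: "finite V1" and fin2: "finite V2" using g1 g2 unfolding simple_graph_def by auto
  have E1V: "E1 x y \<Longrightarrow> x \<in> V1 \<and> y \<in> V1" for x y using g1 unfolding simple_graph_def by auto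
  have E2V: "E2 x y \<Longrightarrow> x \<in> V2 \<and> y \<in> V2" for x y using g2 unfolding simple_graph_def by auto
  have E2s: "E2 x y \<Longrightarrow> E2 y x" for x y using g2 unfolding simple_graph_def by auto
  have E2i: "\<not> E2 x x" for x using g2 unfolding simple_graph_def by auto
  have s1: "x \<in> V1 \<Longrightarrow> (\<Sum>j\<in>nbrs V1 E1 x. f1 j) = 0" for x
    using sum_zero_of_eig[OF g1 assms(3)] by auto
  have s2: "x \<in> V2 \<Longrightarrow> (\<Sum>j\<in>nbrs V2 E2 x. f2 j) = 0" for x
    using sum_zero_of_eig[OF g2 assms(4)] by auto
  have key: "(\<Sum>j\<in>nbrs ?V ?E i. ?u j) = 0" if iV: "i \<in> ?V" for i
  proof (cases i)
    case (Inl x)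
    have xV: "x \<in> V1" using iV Inl unfolding glue_V_def by auto
    have N: "nbrs ?V ?E i = Inl ` (nbrs V1 E1 x) \<union>
        (if x = p1 then Inr ` (nbrs V2 E2 p2 - {p2}) else {})"
    proof (rule set_eqI)
      fix z show "z \<in> nbrs ?V ?E i \<longleftrightarrow> z \<in> Inl ` (nbrs V1 E1 x) \<union>
        (if x = p1 then Inr ` (nbrs V2 E2 p2 - {p2}) else {})"
        using Inl E1V E2V unfolding nbrs_def glue_V_def glue_E_def
        by (cases z) auto
    qed
    have A: "(\<Sum>j\<in>Inl ` (nbrs V1 E1 x). ?u j) = 0"
      using s1[OF xV] by (simp add: sum.reindex glue_fun_def)
    have B: "(\<Sum>j\<in>Inr ` (nbrs V2 E2 p2 - {p2}). ?u j) = 0"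
    proof -
      have "nbrs V2 E2 p2 - {p2} = nbrs V2 E2 p2" using E2i unfolding nbrs_def by auto
      then show ?thesis using s2[OF assms(6)] by (simp add: sum.reindex glue_fun_def)
    qed
    have fa: "finite (nbrs V1 E1 x)" "finite (nbrs V2 E2 p2 - {p2})"
      using fin1 fin2 unfolding nbrs_def by auto
    show ?thesis
    proof (cases "x = p1")
      case True
      have "(\<Sum>j\<in>Inl ` (nbrs V1 E1 x) \<union> Inr ` (nbrs V2 E2 p2 - {p2}). ?u j)
          = (\<Sum>j\<in>Inl ` (nbrs V1 E1 x). ?u j) + (\<Sum>j\<in>Inr ` (nbrs V2 E2 p2 - {p2}). ?u j)"
        by (rule sum.union_disjoint) (use fa in auto)
      then show ?thesis unfolding N using True A B by simp
    next
      case False then show ?thesis unfolding N using A by simp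
    qed
  next
    case (Inr x)
    have xV: "x \<in> V2" "x \<noteq> p2" using iV Inr unfolding glue_V_def by auto
    have N: "nbrs ?V ?E i = Inr ` (nbrs V2 E2 x - {p2}) \<union>
        (if E2 x p2 then {Inl p1} else {})"
    proof (rule set_eqI)
      fix z show "z \<in> nbrs ?V ?E i \<longleftrightarrow> z \<in> Inr ` (nbrs V2 E2 x - {p2}) \<union>
        (if E2 x p2 then {Inl p1} else {})"
        using Inr xV E1V E2V assms(5) unfolding nbrs_def glue_V_def glue_E_def
        by (cases z) auto
    qed
    have fa: "finite (nbrs V2 E2 x - {p2})" using fin2 unfolding nbrs_def by auto
    have C: "(\<Sum>j\<in>Inr ` (nbrs V2 E2 x - {p2}). ?u j) = (\<Sum>j\<in>nbrs V2 E2 x - {p2}. f2 j)"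
      by (simp add: sum.reindex glue_fun_def)
    have D: "(\<Sum>j\<in>nbrs V2 E2 x. f2 j) = (\<Sum>j\<in>nbrs V2 E2 x - {p2}. f2 j)
        + (if E2 x p2 then f2 p2 else 0)"
    proof (cases "E2 x p2")
      case True
      then have "p2 \<in> nbrs V2 E2 x" using assms(6) unfolding nbrs_def by auto
      then show ?thesis using True fin2 unfolding nbrs_def
        by (simp add: sum.remove)
    next
      case False
      then have "nbrs V2 E2 x - {p2} = nbrs V2 E2 x" unfolding nbrs_def by auto
      then show ?thesis using False by simp
    qed
    show ?thesis unfolding N using C D s2[OF xV(1)] fa assms(7)
      by (auto simp: sum.union_disjoint glue_fun_def sum.insert_if)
  qed
  have ef: "eigenfunction ?V ?E 1 ?u"
  proof -
    obtain x where "x \<in> V1" "f1 x \<noteq> 0" using assms(3) unfolding eigenfunction_def by auto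
    then have "\<exists>y\<in>?V. ?u y \<noteq> 0"
      by (intro bexI[of _ "Inl x"]) (auto simp: glue_V_def glue_fun_def)
    then show ?thesis unfolding eigenfunction_def using key by simp
  qed
  then show ?thesis unfolding eigenvalue_def by auto
qed

end
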